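(* Let $f_1,\dots,f_n$ satisfy Assumptions A1, A2 and $f_0$ satisfy Assumption A3. Then $(\hat x,\hat\beta)\in\mathbb{R}^d\times\Delta^{n-1}$ is $(\epsilon_0,\epsilon)$-preference stationary if $\|\nabla f_{\hat\beta}(\hat x)\|_2\le\epsilon$ and, for some $x\in\mathbb{R}^d$ and $\alpha\in(0,1)$: (1) $-\nabla f_0(x)^\top\widehat{\nabla}x^*(x,\hat\beta)(\beta'-\hat\beta)\le\alpha\cdot\epsilon_0\|\beta'-\hat\beta\|_1$ for all $\beta'\in\Delta^{n-1}$; and (2) $\mathrm{err}_{\nabla f_0}(x,\hat\beta)\le(1-\alpha)\cdot\epsilon_0$.
   Context: Assumption A1: each $f_i:\mathbb{R}^d\to\mathbb{R}$ is twice differentiable with $\mu\mathbf{I}\preceq\nabla^2 f_i\preceq L\mathbf{I}$, $0<\mu\le L$, $\kappa:=L/\mu$. Assumption A2: each $\nabla^2 f_i$ is $L_H$-Lipschitz. Assumption A3: $f_0:\mathbb{R}^d\to\mathbb{R}$ has $L_0$-Lipschitz gradient. $F=(f_1,\dots,f_n)$, $\nabla F(x)\in\mathbb{R}^{n\times d}$ its Jacobian, $f_\beta=\sum_i\beta_if_i$ for $\beta\in\Delta^{n-1}$ (simplex), $x^*(\beta)=x_\beta=\operatorname{argmin}_xf_\beta(x)$, $\nabla x^*(\beta)=-\nabla^2f_\beta(x_\beta)^{-1}\nabla F(x_\beta)^\top$, $\widehat{\nabla}x^*(x,\beta):=-\nabla^2f_\beta(x)^{-1}\nabla F(x)^\top$.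 $R$ is the $\ell_2$-diameter of the Pareto set of $F$, $M_0:=\kappa R$, $M_1:=2\kappa^2R(1+L_HR/\mu)$, and $\mathrm{err}_{\nabla f_0}(x,\beta):=\frac{1}{\mu}\big(\frac{M_1}{2M_0}\|\nabla f_0(x)\|_2+L_0M_0\big)\|\nabla f_\beta(x)\|_2$. A point $(x,\beta)$ is $(\epsilon_0,\epsilon)$-preference stationary if $-\nabla f_0(x_\beta)^\top\nabla x^*(\beta)(\beta'-\beta)\le\epsilon_0\|\beta'-\beta\|_1$ for all $\beta'\in\Delta^{n-1}$ and $\|\nabla f_\beta(x)\|_2\le\epsilon$. *)

theory Defs
  imports "HOL-Analysis.Analysis"
begin

text \<open>Objectives f_i : R^d -> R are indexed by a finite type 'n (so n = CARD('n));
  R^d is real^'d.\<close>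

definition prob_simplex :: "(real^'n::finite) set" where
  "prob_simplex = {b. (\<forall>i. 0 \<le> b $ i) \<and> (\<Sum>i\<in>UNIV. b $ i) = 1}"

definition l1norm :: "real^'n::finite \<Rightarrow> real" where
  "l1norm v = (\<Sum>i\<in>UNIV. \<bar>v $ i\<bar>)"

definition assumption_A1 ::
  "('n::finite \<Rightarrow> real^'d::finite \<Rightarrow> real) \<Rightarrow> ('n \<Rightarrow> real^'d \<Rightarrow> real^'d)
   \<Rightarrow> ('n \<Rightarrow> real^'d \<Rightarrow> real^'d^'d) \<Rightarrow> real \<Rightarrow> real \<Rightarrow> bool" where
  "assumption_A1 f Df Hf \<mu> L \<longleftrightarrow>
     0 < \<mu> \<and> \<mu> \<le> L \<and>
     (\<forall>i x. (f i has_derivative (\<lambda>h. Df i x \<bullet> h)) (at x)) \<and>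
     (\<forall>i x. (Df i has_derivative (\<lambda>h. Hf i x *v h)) (at x)) \<and>
     (\<forall>i x v. \<mu> * (v \<bullet> v) \<le> v \<bullet> (Hf i x *v v) \<and> v \<bullet> (Hf i x *v v) \<le> L * (v \<bullet> v))"

definition assumption_A2 :: "('n::finite \<Rightarrow> real^'d::finite \<Rightarrow> real^'d^'d) \<Rightarrow> real \<Rightarrow> bool" where
  "assumption_A2 Hf LH \<longleftrightarrow>
     (\<forall>i x y. onorm (\<lambda>v. (Hf i x - Hf i y) *v v) \<le> LH * norm (x - y))"

definition assumption_A3 :: "(real^'d::finite \<Rightarrow> real) \<Rightarrow> (real^'d \<Rightarrow> real^'d) \<Rightarrow> real \<Rightarrow> bool" where
  "assumption_A3 f0 g0 L0 \<longleftrightarrow>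
     (\<forall>x. (f0 has_derivative (\<lambda>h. g0 x \<bullet> h)) (at x)) \<and>
     (\<forall>x y. norm (g0 x - g0 y) \<le> L0 * norm (x - y))"

definition fbeta :: "('n::finite \<Rightarrow> real^'d::finite \<Rightarrow> real) \<Rightarrow> real^'n \<Rightarrow> real^'d \<Rightarrow> real" where
  "fbeta f b x = (\<Sum>i\<in>UNIV. b $ i * f i x)"

definition gbeta :: "('n::finite \<Rightarrow> real^'d::finite \<Rightarrow> real^'d) \<Rightarrow> real^'n \<Rightarrow> real^'d \<Rightarrow> real^'d" where
  "gbeta Df b x = (\<Sum>i\<in>UNIV. b $ i *\<^sub>R Df i x)"

definition Hbeta :: "('n::finite \<Rightarrow> real^'d::finite \<Rightarrow> real^'d^'d) \<Rightarrow> real^'n \<Rightarrow> real^'d \<Rightarrow> real^'d^'d" where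
  "Hbeta Hf b x = (\<Sum>i\<in>UNIV. b $ i *\<^sub>R Hf i x)"

definition jacF :: "('n::finite \<Rightarrow> real^'d::finite \<Rightarrow> real^'d) \<Rightarrow> real^'d \<Rightarrow> real^'d^'n" where
  "jacF Df x = (\<chi> i. Df i x)"

definition xstar :: "('n::finite \<Rightarrow> real^'d::finite \<Rightarrow> real) \<Rightarrow> real^'n \<Rightarrow> real^'d" where
  "xstar f b = (THE x. \<forall>y. fbeta f b x \<le> fbeta f b y)"

definition hat_grad_xstar ::
  "('n::finite \<Rightarrow> real^'d::finite \<Rightarrow> real^'d) \<Rightarrow> ('n \<Rightarrow> real^'d \<Rightarrow> real^'d^'d)
    \<Rightarrow> real^'d \<Rightarrow> real^'n \<Rightarrow> real^'n^'d" where
  "hat_grad_xstar Df Hf x b = - (matrix_inv (Hbeta Hf b x) ** transpose (jacF Df x))"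

definition grad_xstar ::
  "('n::finite \<Rightarrow> real^'d::finite \<Rightarrow> real) \<Rightarrow> ('n \<Rightarrow> real^'d \<Rightarrow> real^'d)
    \<Rightarrow> ('n \<Rightarrow> real^'d \<Rightarrow> real^'d^'d) \<Rightarrow> real^'n \<Rightarrow> real^'n^'d" where
  "grad_xstar f Df Hf b = hat_grad_xstar Df Hf (xstar f b) b"

definition pareto_set :: "('n::finite \<Rightarrow> real^'d::finite \<Rightarrow> real) \<Rightarrow> (real^'d) set" where
  "pareto_set f = {x. \<not> (\<exists>y. (\<forall>i. f i y \<le> f i x) \<and> (\<exists>i. f i y < f i x))}"

definition Rdiam :: "('n::finite \<Rightarrow> real^'d::finite \<Rightarrow> real) \<Rightarrow> real" where
  "Rdiam f = diameter (pareto_set f)"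

definition M0 :: "('n::finite \<Rightarrow> real^'d::finite \<Rightarrow> real) \<Rightarrow> real \<Rightarrow> real \<Rightarrow> real" where
  "M0 f \<mu> L = (L / \<mu>) * Rdiam f"

definition M1 :: "('n::finite \<Rightarrow> real^'d::finite \<Rightarrow> real) \<Rightarrow> real \<Rightarrow> real \<Rightarrow> real \<Rightarrow> real" where
  "M1 f \<mu> L LH = 2 * (L / \<mu>)^2 * Rdiam f * (1 + LH * Rdiam f / \<mu>)"

definition err_grad_f0 ::
  "('n::finite \<Rightarrow> real^'d::finite \<Rightarrow> real) \<Rightarrow> ('n \<Rightarrow> real^'d \<Rightarrow> real^'d) \<Rightarrow> (real^'d \<Rightarrow> real^'d)
    \<Rightarrow> real \<Rightarrow> real \<Rightarrow> real \<Rightarrow> real \<Rightarrow> real^'d \<Rightarrow> real^'n \<Rightarrow> real" where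
  "err_grad_f0 f Df g0 \<mu> L LH L0 x b =
     (1 / \<mu>) * ((M1 f \<mu> L LH / (2 * M0 f \<mu> L)) * norm (g0 x) + L0 * M0 f \<mu> L)
       * norm (gbeta Df b x)"

definition pref_stationary ::
  "('n::finite \<Rightarrow> real^'d::finite \<Rightarrow> real) \<Rightarrow> ('n \<Rightarrow> real^'d \<Rightarrow> real^'d)
    \<Rightarrow> ('n \<Rightarrow> real^'d \<Rightarrow> real^'d^'d) \<Rightarrow> (real^'d \<Rightarrow> real^'d) \<Rightarrow> real \<Rightarrow> real
    \<Rightarrow> real^'d \<Rightarrow> real^'n \<Rightarrow> bool" where
  "pref_stationary f Df Hf g0 \<epsilon>0 \<epsilon> x b \<longleftrightarrow>
     (\<forall>b'\<in>prob_simplex. - (g0 (xstar f b) \<bullet> (grad_xstar f Df Hf b *v (b' - b))) \<le> \<epsilon>0 * l1norm (b' - b))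
     \<and> norm (gbeta Df b x) \<le> \<epsilon>"

end

theory Submission imports Defs begin

lemma taylor_lower:
  fixes F :: "real^'d::finite \<Rightarrow> real" and G :: "real^'d \<Rightarrow> real^'d" and Hs :: "real^'d \<Rightarrow> real^'d^'d"
  assumes dF: "\<And>x. (F has_derivative (\<lambda>h. G x \<bullet> h)) (at x)"
    and dG: "\<And>x. (G has_derivative (\<lambda>h. Hs x *v h)) (at x)"
    and lo: "\<And>x v. m * (v \<bullet> v) \<le> v \<bullet> (Hs x *v v)"
  shows "F c + G c \<bullet> (y - c) + m / 2 * (norm (y - c))^2 \<le> F y"
proof -
  define u where "u = y - c"
  define \<psi> where "\<psi> t = F (c + t *\<^sub>R u)" for t
  define \<phi> where "\<phi> t = G (c + t *\<^sub>R u) \<bullet> u" for t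
  define k where "k = m * (u \<bullet> u)"
  have line: "((\<lambda>t. c + t *\<^sub>R u) has_derivative (\<lambda>s. s *\<^sub>R u)) (at t)" for t
    by (auto intro!: derivative_eq_intros)
  have d\<psi>: "(\<psi> has_real_derivative \<phi> t) (at t)" for t
  proof -
    have "((\<lambda>t. F (c + t *\<^sub>R u)) has_derivative (\<lambda>s. G (c + t *\<^sub>R u) \<bullet> (s *\<^sub>R u))) (at t)"
      using has_derivative_compose[OF line dF] by simp
    then show ?thesis
      unfolding has_field_derivative_def \<psi>_def \<phi>_def
      by (simp add: mult_commute_abs)
  qed
  have d\<phi>: "(\<phi> has_real_derivative (u \<bullet> (Hs (c + t *\<^sub>R u) *v u))) (at t)" for t
  proof -
    have "((\<lambda>t. G (c + t *\<^sub>R u)) has_derivative (\<lambda>s. Hs (c + t *\<^sub>R u) *v (s *\<^sub>R u))) (at t)"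
      using has_derivative_compose[OF line dG] by simp
    then have "((\<lambda>t. G (c + t *\<^sub>R u) \<bullet> u) has_derivative (\<lambda>s. (Hs (c + t *\<^sub>R u) *v (s *\<^sub>R u)) \<bullet> u)) (at t)"
      by (rule has_derivative_inner_left)
    then show ?thesis
      unfolding has_field_derivative_def \<phi>_def
      by (simp add: matrix_vector_mult_scaleR inner_commute mult_commute_abs)
  qed
  define g where "g t = \<psi> t - \<psi> 0 - t * \<phi> 0 - k * t^2 / 2" for t
  have dg: "(g has_real_derivative (\<phi> t - \<phi> 0 - k * t)) (at t)" for t
    unfolding g_def by (auto intro!: derivative_eq_intros d\<psi>)
  have "\<exists>z. 0 < z \<and> z < 1 \<and> g 1 - g 0 = (1 - 0) * (\<phi> z - \<phi> 0 - k * z)"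
    by (rule MVT2[of 0 1 g "\<lambda>t. \<phi> t - \<phi> 0 - k * t"]) (auto intro: dg)
  then obtain z where z: "0 < z" "z < 1" "g 1 - g 0 = (1 - 0) * (\<phi> z - \<phi> 0 - k * z)"
    by blast
  define h where "h t = \<phi> t - k * t" for t
  have dh: "(h has_real_derivative (u \<bullet> (Hs (c + t *\<^sub>R u) *v u) - k)) (at t)" for t
    unfolding h_def by (auto intro!: derivative_eq_intros d\<phi>)
  have "\<exists>w. 0 < w \<and> w < z \<and> h z - h 0 = (z - 0) * (u \<bullet> (Hs (c + w *\<^sub>R u) *v u) - k)"
    by (rule MVT2[of 0 z h "\<lambda>t. u \<bullet> (Hs (c + t *\<^sub>R u) *v u) - k"]) (auto intro: dh z(1))
  then obtain w where w: "0 < w" "w < z" "h z - h 0 = (z - 0) * (u \<bullet> (Hs (c + w *\<^sub>R u) *v u) - k)"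
    by blast
  have "0 \<le> u \<bullet> (Hs (c + w *\<^sub>R u) *v u) - k" using lo unfolding k_def by simp
  then have "0 \<le> h z - h 0" using w z by simp
  then have "0 \<le> g 1" using z unfolding h_def g_def by simp
  moreover have "norm u ^ 2 = u \<bullet> u" by (simp add: power2_norm_eq_inner)
  ultimately show ?thesis unfolding g_def \<psi>_def \<phi>_def k_def u_def by simp
qed


lemma mvm_neg: "(- A) *v (v :: real^'a::finite) = - (A *v v)"
  by (simp add: matrix_vector_mult_def vec_eq_iff sum_negf)

lemma taylor_upper:
  fixes F :: "real^'d::finite \<Rightarrow> real" and G :: "real^'d \<Rightarrow> real^'d" and Hs :: "real^'d \<Rightarrow> real^'d^'d"
  assumes dF: "\<And>x. (F has_derivative (\<lambda>h. G x \<bullet> h)) (at x)"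
    and dG: "\<And>x. (G has_derivative (\<lambda>h. Hs x *v h)) (at x)"
    and up: "\<And>x v. v \<bullet> (Hs x *v v) \<le> M * (v \<bullet> v)"
  shows "F y \<le> F c + G c \<bullet> (y - c) + M / 2 * (norm (y - c))^2"
proof -
  have dF': "((\<lambda>x. - F x) has_derivative (\<lambda>h. (- G x) \<bullet> h)) (at x)" for x
    using has_derivative_minus[OF dF[of x]] by simp
  have dG': "((\<lambda>x. - G x) has_derivative (\<lambda>h. (- Hs x) *v h)) (at x)" for x
    using has_derivative_minus[OF dG[of x]] by (simp add: mvm_neg)
  have lo': "(- M) * (v \<bullet> v) \<le> v \<bullet> ((- Hs x) *v v)" for x v
    using up[of v x] by (simp add: mvm_neg)
  from taylor_lower[where F="\<lambda>x. - F x" and G="\<lambda>x. - G x" and Hs="\<lambda>x. - Hs x", OF dF' dG' lo', of c y]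
  show ?thesis by simp
qed

lemma cocoercive:
  fixes F :: "real^'d::finite \<Rightarrow> real" and G :: "real^'d \<Rightarrow> real^'d"
  assumes lo: "\<And>c y. F c + G c \<bullet> (y - c) \<le> F y"
    and up: "\<And>c y. F y \<le> F c + G c \<bullet> (y - c) + M / 2 * (norm (y - c))^2"
    and M: "0 < M"
  shows "(norm (G y - G x0))^2 / (2 * M) \<le> F y - F x0 - G x0 \<bullet> (y - x0)"
proof -
  define g where "g = G y - G x0"
  define z where "z = y - (1 / M) *\<^sub>R g"
  have 1: "F x0 + G x0 \<bullet> (z - x0) \<le> F z" by (rule lo)
  have 2: "F z \<le> F y + G y \<bullet> (z - y) + M / 2 * (norm (z - y))^2" by (rule up)
  have zy: "z - y = - ((1 / M) *\<^sub>R g)" unfolding z_def by simp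
  have n: "(norm (z - y))^2 = (norm g)^2 / M^2"
    unfolding zy using M by (simp add: power_divide power2_eq_square)
  have a: "G y \<bullet> (z - y) = - ((G y \<bullet> g) / M)" unfolding zy by simp
  have b: "G x0 \<bullet> (z - x0) = G x0 \<bullet> (y - x0) - (G x0 \<bullet> g) / M"
    unfolding z_def by (simp add: inner_diff_right algebra_simps)
  have gg: "G y \<bullet> g - G x0 \<bullet> g = (norm g)^2"
    unfolding g_def by (simp add: inner_diff_left power2_norm_eq_inner)
  have "F x0 + G x0 \<bullet> (y - x0) - (G x0 \<bullet> g) / M \<le> F y - (G y \<bullet> g) / M + M / 2 * ((norm g)^2 / M^2)"
    using 1 2 a b n by (simp only:)
  moreover have "M / 2 * ((norm g)^2 / M^2) = (norm g)^2 / (2 * M)"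
    using M by (simp add: power2_eq_square field_simps)
  moreover have "(G y \<bullet> g) / M - (G x0 \<bullet> g) / M = (norm g)^2 / M"
    using gg by (simp add: diff_divide_distrib[symmetric])
  moreover have "(norm g)^2 / M = 2 * ((norm g)^2 / (2 * M))" using M by simp
  ultimately show ?thesis unfolding g_def[symmetric] by linarith
qed

lemma grad_lipschitz:
  fixes F :: "real^'d::finite \<Rightarrow> real" and G :: "real^'d \<Rightarrow> real^'d"
  assumes lo: "\<And>c y. F c + G c \<bullet> (y - c) \<le> F y"
    and up: "\<And>c y. F y \<le> F c + G c \<bullet> (y - c) + M / 2 * (norm (y - c))^2"
    and M: "0 < M"
  shows "norm (G y - G x) \<le> M * norm (y - x)"
proof -
  have 1: "(norm (G y - G x))^2 / (2 * M) \<le> F y - F x - G x \<bullet> (y - x)"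
    by (rule cocoercive[OF lo up M])
  have 2: "(norm (G x - G y))^2 / (2 * M) \<le> F x - F y - G y \<bullet> (x - y)"
    by (rule cocoercive[OF lo up M])
  have e: "norm (G x - G y) = norm (G y - G x)" by (rule norm_minus_commute)
  have "G y \<bullet> (x - y) = - (G y \<bullet> (y - x))" by (simp add: inner_diff_right)
  then have "(norm (G y - G x))^2 / M \<le> (G y - G x) \<bullet> (y - x)"
    using 1 2 e M by (simp add: inner_diff_left field_simps) 
  also have "\<dots> \<le> norm (G y - G x) * norm (y - x)" by (rule norm_cauchy_schwarz)
  finally have "(norm (G y - G x))^2 \<le> M * (norm (G y - G x) * norm (y - x))"
    using M by (simp add: field_simps)
  then show ?thesis using M
    by (cases "norm (G y - G x) = 0") (auto simp: power2_eq_square algebra_simps)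
qed


lemma minimizer:
  fixes F :: "real^'d::finite \<Rightarrow> real" and G :: "real^'d \<Rightarrow> real^'d"
  assumes dF: "\<And>x. (F has_derivative (\<lambda>h. G x \<bullet> h)) (at x)"
    and lo: "\<And>c y. F c + G c \<bullet> (y - c) + \<mu> / 2 * (norm (y - c))^2 \<le> F y"
    and mu: "0 < \<mu>"
  shows "(\<forall>y. F (THE x. \<forall>y. F x \<le> F y) \<le> F y) \<and> G (THE x. \<forall>y. F x \<le> F y) = 0"
proof -
  define r where "r = 2 * norm (G 0) / \<mu>"
  have "continuous_on (cball 0 r) F"
    using dF has_derivative_continuous continuous_at_imp_continuous_on by blast
  moreover have "cball 0 r \<noteq> {}" using mu unfolding r_def by (simp add: not_less)
  ultimately obtain x where x: "x \<in> cball 0 r" "\<forall>y\<in>cball 0 r. F x \<le> F y"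
    using continuous_attains_inf[of "cball 0 r" F] by auto
  have F0: "F x \<le> F 0" using x mu unfolding r_def by simp
  have xmin: "F x \<le> F y" for y
  proof (cases "y \<in> cball 0 r")
    case True then show ?thesis using x by blast
  next
    case False
    then have ny: "norm y > r" by simp
    have "F 0 + G 0 \<bullet> y + \<mu> / 2 * (norm y)^2 \<le> F y" using lo[of 0 y] by simp
    moreover have "- (norm (G 0) * norm y) \<le> G 0 \<bullet> y"
      using norm_cauchy_schwarz[of "- G 0" y] by simp
    moreover have "norm (G 0) * norm y \<le> \<mu> / 2 * (norm y)^2"
    proof -
      have "norm (G 0) \<le> \<mu> / 2 * norm y" using ny mu unfolding r_def by (simp add: field_simps)
      then have "norm (G 0) * norm y \<le> (\<mu> / 2 * norm y) * norm y"
        by (rule mult_right_mono) simp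
      then show ?thesis by (simp add: power2_eq_square)
    qed
    ultimately show ?thesis using F0 by linarith
  qed
  have Gx: "G x = 0"
  proof -
    have "(\<lambda>h. G x \<bullet> h) = (\<lambda>v. 0)"
      using differential_zero_maxmin[of x UNIV F "(\<bullet>) (G x)"] dF xmin by auto
    then have "G x \<bullet> G x = 0" by metis
    then show ?thesis by simp
  qed
  have uniq: "x' = x" if "\<forall>y. F x' \<le> F y" for x'
  proof -
    have "F x + G x \<bullet> (x' - x) + \<mu> / 2 * (norm (x' - x))^2 \<le> F x'" by (rule lo)
    with that[rule_format, of x] Gx have "\<mu> / 2 * (norm (x' - x))^2 \<le> 0" by simp
    with mu have "(norm (x' - x))^2 \<le> 0" by (simp add: mult_le_0_iff)
    then show ?thesis by simp
  qed
  have "(THE x. \<forall>y. F x \<le> F y) = x"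
    by (rule the_equality) (use xmin uniq in auto)
  then show ?thesis using xmin Gx by simp
qed

lemma mvm_scaleR: "(c *\<^sub>R A) *v (h :: real^'a::finite) = c *\<^sub>R (A *v h)"
  by (simp add: matrix_vector_mult_def vec_eq_iff sum_distrib_left mult.assoc)

lemma mvm_sum: "finite S \<Longrightarrow> (sum A S) *v (h :: real^'a::finite) = (\<Sum>i\<in>S. A i *v h)"
  by (induction S rule: finite_induct) (simp_all add: matrix_vector_mult_add_rdistrib)

lemma Hbeta_mv: "Hbeta Hf b x *v h = (\<Sum>i\<in>UNIV. b $ i *\<^sub>R (Hf i x *v h))"
  unfolding Hbeta_def by (simp add: mvm_sum mvm_scaleR)

lemma gbeta_deriv:
  assumes "\<And>i x. (Df i has_derivative (\<lambda>h. Hf i x *v h)) (at x)"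
  shows "(gbeta Df b has_derivative (\<lambda>h. Hbeta Hf b x *v h)) (at x)"
proof -
  have "((\<lambda>x. \<Sum>i\<in>UNIV. b $ i *\<^sub>R Df i x) has_derivative (\<lambda>h. \<Sum>i\<in>UNIV. b $ i *\<^sub>R (Hf i x *v h))) (at x)"
    by (intro has_derivative_sum has_derivative_scaleR_right assms)
  then show ?thesis unfolding Hbeta_mv by (simp add: gbeta_def[abs_def])
qed

lemma fbeta_deriv:
  assumes "\<And>i x. (f i has_derivative (\<lambda>h. Df i x \<bullet> h)) (at x)"
  shows "(fbeta f b has_derivative (\<lambda>h. gbeta Df b x \<bullet> h)) (at x)"
proof -
  have "((\<lambda>x. \<Sum>i\<in>UNIV. b $ i * f i x) has_derivative (\<lambda>h. \<Sum>i\<in>UNIV. b $ i * (Df i x \<bullet> h))) (at x)"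
    by (intro has_derivative_sum has_derivative_mult_right assms)
  then show ?thesis by (simp add: gbeta_def fbeta_def[abs_def] inner_sum_left)
qed

lemma Hbeta_lower:
  assumes "\<forall>i. 0 \<le> b $ i" "(\<Sum>i\<in>UNIV. b $ i) = 1"
    and "\<And>i x v. \<mu> * (v \<bullet> v) \<le> v \<bullet> (Hf i x *v v)"
  shows "\<mu> * (v \<bullet> v) \<le> v \<bullet> (Hbeta Hf b x *v v)"
proof -
  have "\<mu> * (v \<bullet> v) = (\<Sum>i\<in>UNIV. b $ i * (\<mu> * (v \<bullet> v)))"
    using assms(2) by (simp add: sum_distrib_right[symmetric])
  also have "\<dots> \<le> (\<Sum>i\<in>UNIV. b $ i * (v \<bullet> (Hf i x *v v)))"
    by (intro sum_mono mult_left_mono assms(3)) (use assms(1) in auto)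
  also have "\<dots> = v \<bullet> (Hbeta Hf b x *v v)"
    by (simp add: Hbeta_mv inner_sum_right)
  finally show ?thesis .
qed


lemma strong_mono:
  fixes F :: "real^'d::finite \<Rightarrow> real" and G :: "real^'d \<Rightarrow> real^'d"
  assumes lo: "\<And>c y. F c + G c \<bullet> (y - c) + \<mu> / 2 * (norm (y - c))^2 \<le> F y"
  shows "\<mu> * (norm (y - c))^2 \<le> (G y - G c) \<bullet> (y - c)"
proof -
  have 1: "F c + G c \<bullet> (y - c) + \<mu> / 2 * (norm (y - c))^2 \<le> F y" by (rule lo)
  have 2: "F y + G y \<bullet> (c - y) + \<mu> / 2 * (norm (c - y))^2 \<le> F c" by (rule lo)
  have "norm (c - y) = norm (y - c)" by (rule norm_minus_commute)
  moreover have "G y \<bullet> (c - y) = - (G y \<bullet> (y - c))" by (simp add: inner_diff_right)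
  ultimately show ?thesis using 1 2 by (simp add: inner_diff_left)
qed

lemma A1_parts:
  assumes "assumption_A1 f Df Hf \<mu> L"
  shows "0 < \<mu>" "\<mu> \<le> L" "\<And>i x. (f i has_derivative (\<lambda>h. Df i x \<bullet> h)) (at x)"
    "\<And>i x. (Df i has_derivative (\<lambda>h. Hf i x *v h)) (at x)"
    "\<And>i x v. \<mu> * (v \<bullet> v) \<le> v \<bullet> (Hf i x *v v)"
    "\<And>i x v. v \<bullet> (Hf i x *v v) \<le> L * (v \<bullet> v)"
  using assms unfolding assumption_A1_def by auto

lemma fbeta_lower:
  assumes A1: "assumption_A1 f Df Hf \<mu> L" and b: "b \<in> prob_simplex"
  shows "fbeta f b c + gbeta Df b c \<bullet> (y - c) + \<mu> / 2 * (norm (y - c))^2 \<le> fbeta f b y"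
proof -
  note P = A1_parts[OF A1]
  have b1: "\<forall>i. 0 \<le> b $ i" "(\<Sum>i\<in>UNIV. b $ i) = 1" using b unfolding prob_simplex_def by auto
  show ?thesis
    by (rule taylor_lower[where Hs="Hbeta Hf b"])
       (auto intro: fbeta_deriv gbeta_deriv P(3) P(4) Hbeta_lower[OF b1] P(5))
qed

lemma xstar_props:
  assumes A1: "assumption_A1 f Df Hf \<mu> L" and b: "b \<in> prob_simplex"
  shows "\<forall>y. fbeta f b (xstar f b) \<le> fbeta f b y" "gbeta Df b (xstar f b) = 0"
proof -
  note P = A1_parts[OF A1]
  have "(\<forall>y. fbeta f b (THE x. \<forall>y. fbeta f b x \<le> fbeta f b y) \<le> fbeta f b y) \<and>
        gbeta Df b (THE x. \<forall>y. fbeta f b x \<le> fbeta f b y) = 0"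
    by (rule minimizer[OF fbeta_deriv fbeta_lower[OF A1 b] P(1)]) (rule P(3))
  then show "\<forall>y. fbeta f b (xstar f b) \<le> fbeta f b y" "gbeta Df b (xstar f b) = 0"
    unfolding xstar_def by auto
qed

lemma xstar_pareto:
  assumes A1: "assumption_A1 f Df Hf \<mu> L" and b: "b \<in> prob_simplex"
  shows "xstar f b \<in> pareto_set f"
proof (rule ccontr)
  note P = A1_parts[OF A1]
  define xb where "xb = xstar f b"
  assume "xstar f b \<notin> pareto_set f"
  then obtain y j where y: "\<forall>i. f i y \<le> f i xb" "f j y < f j xb"
    unfolding pareto_set_def xb_def by auto
  have b1: "\<forall>i. 0 \<le> b $ i" using b unfolding prob_simplex_def by auto
  have "fbeta f b y \<le> fbeta f b xb"
    unfolding fbeta_def by (intro sum_mono mult_left_mono) (use y b1 in auto)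
  moreover have "fbeta f b xb + gbeta Df b xb \<bullet> (y - xb) + \<mu> / 2 * (norm (y - xb))^2 \<le> fbeta f b y"
    by (rule fbeta_lower[OF A1 b])
  moreover have "gbeta Df b xb = 0" using xstar_props[OF A1 b] xb_def by simp
  ultimately have "\<mu> / 2 * (norm (y - xb))^2 \<le> 0" by simp
  with P(1) have "(norm (y - xb))^2 \<le> 0" by (simp add: mult_le_0_iff)
  then have "y = xb" by simp
  with y show False by simp
qed

lemma fi_lower:
  assumes A1: "assumption_A1 f Df Hf \<mu> L"
  shows "f i c + Df i c \<bullet> (y - c) + \<mu> / 2 * (norm (y - c))^2 \<le> f i y"
  using A1_parts[OF A1] by (intro taylor_lower[where Hs="Hf i"]) auto

lemma fi_upper:
  assumes A1: "assumption_A1 f Df Hf \<mu> L"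
  shows "f i y \<le> f i c + Df i c \<bullet> (y - c) + L / 2 * (norm (y - c))^2"
  using A1_parts[OF A1] by (intro taylor_upper[where Hs="Hf i"]) auto

lemma fi_lip:
  assumes A1: "assumption_A1 f Df Hf \<mu> L"
  shows "norm (Df i y - Df i x) \<le> L * norm (y - x)"
proof (rule grad_lipschitz[where F="f i"])
  note P = A1_parts[OF A1]
  show "f i c + Df i c \<bullet> (y - c) \<le> f i y" for c y
  proof -
    have "0 \<le> \<mu> / 2 * (norm (y - c))^2" using P(1) by simp
    then show ?thesis using fi_lower[OF A1, of i c y] by linarith
  qed
  show "f i y \<le> f i c + Df i c \<bullet> (y - c) + L / 2 * (norm (y - c))^2" for c y
    by (rule fi_upper[OF A1])
  show "0 < L" using P(1,2) by simp
qed

lemma pareto_bounded: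
  assumes A1: "assumption_A1 f Df Hf \<mu> L"
  shows "bounded (pareto_set f)"
proof -
  note P = A1_parts[OF A1]
  define r where "r = (\<Sum>i\<in>UNIV. 2 * norm (Df i 0) / \<mu>)"
  have "norm x \<le> r" if x: "x \<in> pareto_set f" for x
  proof (rule ccontr)
    assume "\<not> norm x \<le> r"
    then have nx: "norm x > r" by simp
    have lt: "f i 0 < f i x" for i
    proof -
      have "2 * norm (Df i 0) / \<mu> \<le> r" unfolding r_def
        by (rule member_le_sum) (use P(1) in auto)
      then have ri: "2 * norm (Df i 0) / \<mu> < norm x" using nx by simp
      then have "norm (Df i 0) < \<mu> / 2 * norm x" using P(1) by (simp add: field_simps)
      moreover have "0 \<le> 2 * norm (Df i 0) / \<mu>" using P(1) by simp
      then have "norm x > 0" using ri by linarith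
      ultimately have A: "norm (Df i 0) * norm x < \<mu> / 2 * norm x * norm x"
        by (intro mult_strict_right_mono) auto
      have B: "- (norm (Df i 0) * norm x) \<le> Df i 0 \<bullet> x"
        using norm_cauchy_schwarz[of "- Df i 0" x] by simp
      have C: "f i 0 + Df i 0 \<bullet> x + \<mu> / 2 * (norm x)^2 \<le> f i x"
        using fi_lower[OF A1, of i 0 x] by simp
      have D: "\<mu> / 2 * (norm x)^2 = \<mu> / 2 * norm x * norm x" by (simp add: power2_eq_square)
      show ?thesis using A B C D by linarith
    qed
    have "\<not> (\<exists>y. (\<forall>i. f i y \<le> f i x) \<and> (\<exists>i. f i y < f i x))" using x unfolding pareto_set_def by simp
    moreover have "(\<forall>i. f i 0 \<le> f i x) \<and> (\<exists>i. f i 0 < f i x)" using lt by (auto intro: less_imp_le)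
    ultimately show False by blast
  qed
  then show ?thesis unfolding bounded_iff by blast
qed

lemma axis_simplex: "axis i 1 \<in> (prob_simplex :: (real^'n::finite) set)"
  unfolding prob_simplex_def by (auto simp: axis_def)

lemma fbeta_axis: "fbeta f (axis i 1) = f i"
proof (rule ext)
  fix x
  have "fbeta f (axis i 1) x = (\<Sum>j\<in>UNIV. if j = i then f j x else 0)"
    unfolding fbeta_def axis_def by (intro sum.cong) auto
  then show "fbeta f (axis i 1) x = f i x" by simp
qed

lemma gbeta_axis: "gbeta Df (axis i 1) = Df i"
proof (rule ext)
  fix x
  have "gbeta Df (axis i 1) x = (\<Sum>j\<in>UNIV. if j = i then Df j x else 0)"
    unfolding gbeta_def axis_def by (intro sum.cong) auto
  then show "gbeta Df (axis i 1) x = Df i x" by simp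
qed

lemma Df_bound:
  assumes A1: "assumption_A1 f Df Hf \<mu> L" and b: "b \<in> prob_simplex"
  shows "norm (Df i (xstar f b)) \<le> L * Rdiam f"
proof -
  note P = A1_parts[OF A1]
  define xi where "xi = xstar f (axis i 1)"
  have "gbeta Df (axis i 1) xi = 0" unfolding xi_def by (rule xstar_props[OF A1 axis_simplex])
  then have z: "Df i xi = 0" by (simp add: gbeta_axis)
  have "norm (Df i (xstar f b)) = norm (Df i (xstar f b) - Df i xi)" using z by simp
  also have "\<dots> \<le> L * norm (xstar f b - xi)" by (rule fi_lip[OF A1])
  also have "\<dots> \<le> L * Rdiam f"
  proof (rule mult_left_mono)
    show "norm (xstar f b - xi) \<le> Rdiam f"
      using diameter_bounded_bound[OF pareto_bounded[OF A1] xstar_pareto[OF A1 b]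
          xstar_pareto[OF A1 axis_simplex, of i]]
      unfolding Rdiam_def xi_def by (simp add: dist_norm)
    show "0 \<le> L" using P(1,2) by simp
  qed
  finally show ?thesis .
qed

lemma Rdiam_nonneg:
  assumes A1: "assumption_A1 f Df Hf \<mu> L"
  shows "0 \<le> Rdiam f"
  using diameter_bounded_bound[OF pareto_bounded[OF A1] xstar_pareto[OF A1 axis_simplex[of undefined]]
      xstar_pareto[OF A1 axis_simplex[of undefined]]]
  unfolding Rdiam_def by simp


lemma pd_norm:
  fixes H :: "real^'d::finite^'d"
  assumes lo: "\<And>v. \<mu> * (v \<bullet> v) \<le> v \<bullet> (H *v v)" and mu: "0 < \<mu>"
  shows "\<mu> * norm u \<le> norm (H *v u)"
proof (cases "u = 0")
  case True then show ?thesis by simp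
next
  case False
  have "\<mu> * (norm u * norm u) \<le> u \<bullet> (H *v u)" using lo[of u] by (simp add: dot_square_norm power2_eq_square)
  also have "\<dots> \<le> norm u * norm (H *v u)" by (rule norm_cauchy_schwarz)
  finally have "(\<mu> * norm u) * norm u \<le> norm (H *v u) * norm u" by (simp add: ac_simps)
  then show ?thesis using False by simp
qed

lemma pd_inv:
  fixes H :: "real^'d::finite^'d"
  assumes lo: "\<And>v. \<mu> * (v \<bullet> v) \<le> v \<bullet> (H *v v)" and mu: "0 < \<mu>"
  shows "H *v (matrix_inv H *v w) = w"
proof -
  have ker: "\<forall>x. H *v x = 0 \<longrightarrow> x = 0"
  proof (intro allI impI)
    fix x assume "H *v x = 0"
    then have "\<mu> * norm x \<le> 0" using pd_norm[OF lo mu, of x] by simp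
    then have "norm x \<le> 0" using mu by (simp add: mult_le_0_iff)
    then show "x = 0" by simp
  qed
  then have "invertible H"
    using invertible_left_inverse matrix_left_invertible_ker by blast
  then have "H ** matrix_inv H = mat 1 \<and> matrix_inv H ** H = mat 1"
    unfolding invertible_def matrix_inv_def by (rule someI_ex)
  then show ?thesis by (simp add: matrix_vector_mul_assoc)
qed

lemma pd_inv_norm:
  fixes H :: "real^'d::finite^'d"
  assumes lo: "\<And>v. \<mu> * (v \<bullet> v) \<le> v \<bullet> (H *v v)" and mu: "0 < \<mu>"
  shows "norm (matrix_inv H *v w) \<le> norm w / \<mu>"
  using pd_norm[OF lo mu, of "matrix_inv H *v w"] pd_inv[OF lo mu, of w] mu
  by (simp add: field_simps)

lemma jac_mv: "transpose (jacF Df x) *v v = (\<Sum>i\<in>UNIV. v $ i *\<^sub>R Df i x)"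
  by (simp add: jacF_def vector_matrix_mult_def vec_eq_iff sum_component)

lemma jac_mv': "v v* jacF Df x = (\<Sum>i\<in>UNIV. v $ i *\<^sub>R Df i x)"
  using jac_mv[of Df x v] by simp

lemma hat_mv: "hat_grad_xstar Df Hf x b *v v = - (matrix_inv (Hbeta Hf b x) *v (\<Sum>i\<in>UNIV. v $ i *\<^sub>R Df i x))"
  by (simp add: hat_grad_xstar_def mvm_neg matrix_vector_mul_assoc[symmetric] jac_mv')

lemma l1_sum_bound:
  assumes "\<And>i. norm (a i) \<le> B"
  shows "norm (\<Sum>i\<in>UNIV. v $ i *\<^sub>R (a i :: real^'d::finite)) \<le> l1norm v * B"
proof -
  have "norm (\<Sum>i\<in>UNIV. v $ i *\<^sub>R a i) \<le> (\<Sum>i\<in>UNIV. \<bar>v $ i\<bar> * norm (a i))"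
    by (rule order_trans[OF norm_sum]) simp
  also have "\<dots> \<le> (\<Sum>i\<in>UNIV. \<bar>v $ i\<bar> * B)"
    by (intro sum_mono mult_left_mono assms) simp
  also have "\<dots> = l1norm v * B" by (simp add: l1norm_def sum_distrib_right)
  finally show ?thesis .
qed


theorem lemma5:
  fixes f :: "'n::finite \<Rightarrow> real^'d::finite \<Rightarrow> real"
    and Df :: "'n \<Rightarrow> real^'d \<Rightarrow> real^'d"
    and Hf :: "'n \<Rightarrow> real^'d \<Rightarrow> real^'d^'d"
    and f0 :: "real^'d \<Rightarrow> real" and g0 :: "real^'d \<Rightarrow> real^'d"
    and \<mu> L LH L0 \<epsilon>0 \<epsilon> \<alpha> :: real
    and xhat x :: "real^'d" and bhat :: "real^'n"
  assumes A1: "assumption_A1 f Df Hf \<mu> L"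
    and A2: "assumption_A2 Hf LH"
    and A3: "assumption_A3 f0 g0 L0"
    and bhat: "bhat \<in> prob_simplex"
    and grad_small: "norm (gbeta Df bhat xhat) \<le> \<epsilon>"
    and alpha: "0 < \<alpha>" "\<alpha> < 1"
    and cond1: "\<forall>b'\<in>prob_simplex. - (g0 x \<bullet> (hat_grad_xstar Df Hf x bhat *v (b' - bhat)))
                  \<le> \<alpha> * \<epsilon>0 * l1norm (b' - bhat)"
    and cond2: "err_grad_f0 f Df g0 \<mu> L LH L0 x bhat \<le> (1 - \<alpha>) * \<epsilon>0"
  shows "pref_stationary f Df Hf g0 \<epsilon>0 \<epsilon> xhat bhat"
proof -
  note P = A1_parts[OF A1]
  have b1: "\<forall>i. 0 \<le> bhat $ i" "(\<Sum>i\<in>UNIV. bhat $ i) = 1" using bhat unfolding prob_simplex_def by auto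
  have Hlo: "\<mu> * (v \<bullet> v) \<le> v \<bullet> (Hbeta Hf bhat y *v v)" for y v
    by (rule Hbeta_lower[OF b1 P(5)])
  define R where "R = Rdiam f"
  have R0: "0 \<le> R" unfolding R_def by (rule Rdiam_nonneg[OF A1])
  define e :: "real^'d" where "e = axis undefined 1"
  have ne: "norm e = 1" unfolding e_def by simp
  have LH0: "0 \<le> LH"
  proof -
    have "0 \<le> onorm (\<lambda>v. (Hf undefined e - Hf undefined 0) *v v)"
      by (rule onorm_pos_le) simp
    also have "\<dots> \<le> LH * norm (e - 0)" using A2 unfolding assumption_A2_def by blast
    finally show ?thesis using ne by simp
  qed
  have L00: "0 \<le> L0"
  proof -
    have "0 \<le> norm (g0 e - g0 0)" by simp
    also have "\<dots> \<le> L0 * norm (e - 0)" using A3 unfolding assumption_A3_def by blast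
    finally show ?thesis using ne by simp
  qed
  have Lpos: "0 < L" using P(1,2) by simp
  define M0v where "M0v = M0 f \<mu> L"
  define K where "K = L / \<mu> * (1 + LH * R / \<mu>)"
  have M0v: "M0v = L / \<mu> * R" unfolding M0v_def M0_def R_def by simp
  have M0nn: "0 \<le> M0v" unfolding M0v using R0 Lpos P(1) by simp
  have Knn: "0 \<le> K" unfolding K_def using R0 Lpos P(1) LH0 by simp
  define D where "D = norm (gbeta Df bhat x)"
  have ratio_nn: "0 \<le> M1 f \<mu> L LH / (2 * M0 f \<mu> L)"
    unfolding M1_def M0_def using R0 Lpos P(1) LH0 R_def by simp
  have errnn: "0 \<le> err_grad_f0 f Df g0 \<mu> L LH L0 x bhat"
  proof -
    have "0 \<le> M1 f \<mu> L LH / (2 * M0 f \<mu> L) * norm (g0 x) + L0 * M0 f \<mu> L"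
      using ratio_nn M0nn L00 M0v_def by (intro add_nonneg_nonneg mult_nonneg_nonneg) auto
    then show ?thesis unfolding err_grad_f0_def using P(1)
      by (intro mult_nonneg_nonneg) auto
  qed
  have eps0: "0 \<le> \<epsilon>0"
  proof -
    have "0 \<le> (1 - \<alpha>) * \<epsilon>0" using errnn cond2 by linarith
    then show ?thesis using alpha by (simp add: zero_le_mult_iff)
  qed
  define xb where "xb = xstar f bhat"
  define Hb where "Hb = Hbeta Hf bhat xb"
  define Hx where "Hx = Hbeta Hf bhat x"
  define \<delta> where "\<delta> = norm (x - xb)"
  have gxb: "gbeta Df bhat xb = 0" unfolding xb_def by (rule xstar_props[OF A1 bhat])
  have \<delta>D: "\<mu> * \<delta> \<le> D"
  proof -
    have 1: "\<mu> * (norm (x - xb))^2 \<le> (gbeta Df bhat x - gbeta Df bhat xb) \<bullet> (x - xb)"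
      by (rule strong_mono[OF fbeta_lower[OF A1 bhat]])
    have 2: "(gbeta Df bhat x - gbeta Df bhat xb) \<bullet> (x - xb) = gbeta Df bhat x \<bullet> (x - xb)"
      using gxb by simp
    have 3: "gbeta Df bhat x \<bullet> (x - xb) \<le> D * \<delta>"
      unfolding D_def \<delta>_def by (rule norm_cauchy_schwarz)
    have "(\<mu> * \<delta>) * \<delta> \<le> D * \<delta>"
      using 1 2 3 unfolding \<delta>_def[symmetric] by (simp add: power2_eq_square mult.assoc)
    moreover have "0 \<le> \<delta>" unfolding \<delta>_def by simp
    moreover have "0 \<le> D" unfolding D_def by simp
    ultimately show ?thesis
      by (cases "\<delta> = 0") (simp_all add: mult_le_cancel_right)
  qed
  have main: "- (g0 xb \<bullet> (grad_xstar f Df Hf bhat *v (b' - bhat))) \<le> \<epsilon>0 * l1norm (b' - bhat)"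
    if b': "b' \<in> prob_simplex" for b'
  proof -
    define v where "v = b' - bhat"
    define ll where "ll = l1norm v"
    have ll0: "0 \<le> ll" unfolding ll_def l1norm_def by (simp add: sum_nonneg)
    define wb where "wb = (\<Sum>i\<in>UNIV. v $ i *\<^sub>R Df i xb)"
    define wx where "wx = (\<Sum>i\<in>UNIV. v $ i *\<^sub>R Df i x)"
    define p where "p = matrix_inv Hb *v wb"
    define q where "q = matrix_inv Hx *v wx"
    have gx: "grad_xstar f Df Hf bhat *v v = - p"
      unfolding grad_xstar_def hat_mv p_def wb_def Hb_def xb_def by simp
    have hx: "hat_grad_xstar Df Hf x bhat *v v = - q"
      unfolding hat_mv q_def wx_def Hx_def by simp
    have c1: "g0 x \<bullet> q \<le> \<alpha> * \<epsilon>0 * ll"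
      using cond1 b' hx unfolding v_def ll_def by auto
    have wbB: "norm wb \<le> ll * (L * R)"
      unfolding wb_def ll_def R_def xb_def by (rule l1_sum_bound[OF Df_bound[OF A1 bhat]])
    have pB: "norm p \<le> ll * M0v"
    proof -
      have "norm p \<le> norm wb / \<mu>" unfolding p_def Hb_def by (rule pd_inv_norm[OF Hlo P(1)])
      also have "\<dots> \<le> ll * (L * R) / \<mu>" using wbB P(1) by (simp add: divide_right_mono)
      finally show ?thesis unfolding M0v by simp
    qed
    have goal: "g0 xb \<bullet> p \<le> \<epsilon>0 * ll"
    proof (cases "R = 0")
      case True
      then have "norm p \<le> 0" using pB M0v by simp
      then have "p = 0" by simp
      then show ?thesis using eps0 ll0 by simp
    next
      case False
      then have Rpos: "0 < R" using R0 by simp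
      have ratio: "M1 f \<mu> L LH / (2 * M0 f \<mu> L) = K"
        unfolding M1_def M0_def K_def R_def[symmetric] using Rpos P(1) Lpos
        by (simp add: field_simps power2_eq_square)
      have err: "err_grad_f0 f Df g0 \<mu> L LH L0 x bhat = (1 / \<mu>) * (K * norm (g0 x) + L0 * M0v) * D"
        unfolding err_grad_f0_def ratio D_def M0v_def by simp
      have wdiff: "norm (wb - wx) \<le> ll * (L * \<delta>)"
      proof -
        have "wb - wx = (\<Sum>i\<in>UNIV. v $ i *\<^sub>R (Df i xb - Df i x))"
          unfolding wb_def wx_def by (simp add: sum_subtractf scaleR_diff_right)
        also have "norm \<dots> \<le> ll * (L * \<delta>)" unfolding ll_def
        proof (rule l1_sum_bound)
          fix i
          have "norm (Df i xb - Df i x) \<le> L * norm (xb - x)" by (rule fi_lip[OF A1])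
          then show "norm (Df i xb - Df i x) \<le> L * \<delta>" unfolding \<delta>_def by (simp add: norm_minus_commute)
        qed
        finally show ?thesis .
      qed
      have Hdiff: "norm (Hx *v p - Hb *v p) \<le> LH * \<delta> * norm p"
      proof -
        have "Hx *v p - Hb *v p = (\<Sum>i\<in>UNIV. bhat $ i *\<^sub>R ((Hf i x - Hf i xb) *v p))"
          unfolding Hx_def Hb_def Hbeta_mv
          by (simp add: sum_subtractf scaleR_diff_right matrix_vector_mult_diff_rdistrib)
        also have "norm \<dots> \<le> l1norm bhat * (LH * \<delta> * norm p)"
        proof (rule l1_sum_bound)
          fix i
          have "norm ((Hf i x - Hf i xb) *v p) \<le> onorm (\<lambda>v. (Hf i x - Hf i xb) *v v) * norm p"
            by (rule onorm) simp
          also have "\<dots> \<le> (LH * norm (x - xb)) * norm p"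
            using A2 unfolding assumption_A2_def by (intro mult_right_mono) auto
          finally show "norm ((Hf i x - Hf i xb) *v p) \<le> LH * \<delta> * norm p" unfolding \<delta>_def .
        qed
        also have "l1norm bhat = 1" unfolding l1norm_def using b1 by simp
        finally show ?thesis by simp
      qed
      have pqeq: "Hx *v (p - q) = (Hx *v p - Hb *v p) + (wb - wx)"
        using pd_inv[OF Hlo P(1), of xb wb] pd_inv[OF Hlo P(1), of x wx]
        unfolding p_def q_def Hb_def Hx_def by (simp add: matrix_vector_mult_diff_distrib)
      have "\<mu> * norm (p - q) \<le> norm (Hx *v (p - q))" unfolding Hx_def by (rule pd_norm[OF Hlo P(1)])
      also have "\<dots> \<le> LH * \<delta> * norm p + ll * (L * \<delta>)"
        unfolding pqeq by (rule norm_triangle_le) (use Hdiff wdiff in linarith)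
      also have "\<dots> \<le> LH * \<delta> * (ll * M0v) + ll * (L * \<delta>)"
        using pB LH0 by (simp add: \<delta>_def mult_left_mono)
      also have "\<dots> = \<mu> * (\<delta> * ll * K)"
        unfolding K_def M0v using P(1) by (simp add: field_simps)
      finally have pq: "norm (p - q) \<le> \<delta> * ll * K" using P(1) by simp
      have g0d: "norm (g0 xb - g0 x) \<le> L0 * \<delta>"
      proof -
        have "norm (g0 xb - g0 x) \<le> L0 * norm (xb - x)" using A3 unfolding assumption_A3_def by blast
        then show ?thesis unfolding \<delta>_def by (simp add: norm_minus_commute)
      qed
      have t1: "(g0 xb - g0 x) \<bullet> p \<le> L0 * \<delta> * (ll * M0v)"
      proof -
        have "(g0 xb - g0 x) \<bullet> p \<le> norm (g0 xb - g0 x) * norm p" by (rule norm_cauchy_schwarz)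
        also have "\<dots> \<le> (L0 * \<delta>) * (ll * M0v)"
          by (rule mult_mono[OF g0d pB]) (simp_all add: L00 \<delta>_def)
        finally show ?thesis .
      qed
      have t2: "g0 x \<bullet> (p - q) \<le> norm (g0 x) * (\<delta> * ll * K)"
      proof -
        have "g0 x \<bullet> (p - q) \<le> norm (g0 x) * norm (p - q)" by (rule norm_cauchy_schwarz)
        also have "\<dots> \<le> norm (g0 x) * (\<delta> * ll * K)"
          by (rule mult_left_mono[OF pq]) simp
        finally show ?thesis .
      qed
      have split: "g0 xb \<bullet> p = g0 x \<bullet> q + (g0 xb - g0 x) \<bullet> p + g0 x \<bullet> (p - q)"
        by (simp add: inner_diff_left inner_diff_right)
      have "L0 * \<delta> * (ll * M0v) + norm (g0 x) * (\<delta> * ll * K) = (K * norm (g0 x) + L0 * M0v) * \<delta> * ll"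
        by (simp add: algebra_simps)
      also have "\<dots> \<le> (K * norm (g0 x) + L0 * M0v) * (D / \<mu>) * ll"
      proof -
        have "\<delta> \<le> D / \<mu>" using \<delta>D P(1) by (simp add: field_simps)
        moreover have "0 \<le> K * norm (g0 x) + L0 * M0v" using Knn L00 M0nn by simp
        ultimately show ?thesis using ll0 by (intro mult_right_mono mult_left_mono) auto
      qed
      also have "\<dots> = err_grad_f0 f Df g0 \<mu> L LH L0 x bhat * ll" unfolding err by simp
      also have "\<dots> \<le> (1 - \<alpha>) * \<epsilon>0 * ll" using cond2 ll0 by (rule mult_right_mono)
      finally have "g0 xb \<bullet> p \<le> \<alpha> * \<epsilon>0 * ll + (1 - \<alpha>) * \<epsilon>0 * ll"
        using split c1 t1 t2 by linarith
      then show ?thesis by (simp add: algebra_simps)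
    qed
    show ?thesis using goal unfolding v_def[symmetric] gx ll_def by simp
  qed
  show ?thesis unfolding pref_stationary_def using main grad_small xb_def by auto
qed

end
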